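(* Let $0<\alpha<1$, let $x>0$ be fixed, let $y$ be a polynomial, and for an integer $n\ge 2$ put $h=x/n$ and $y_j=y(jh)$. Then, as $n\to\infty$, $$y^{(\alpha)}(x)=\frac{1}{\Gamma(2-\alpha)h^\alpha}\sum_{k=0}^n \delta_k^{(\alpha)} y_{n-k}+O\left(h^{2}\right).$$
   Context: The Caputo derivative of order $\alpha\in(0,1)$ is $y^{(\alpha)}(x)=\frac{1}{\Gamma(1-\alpha)}\int_0^x \frac{y'(\xi)}{(x-\xi)^{\alpha}}\,d\xi$. For a given integer $n\ge 2$ define $\sigma_0^{(\alpha)}=1$, $\sigma_n^{(\alpha)}=(n-1)^{1-\alpha}-n^{1-\alpha}$, and $\sigma_k^{(\alpha)}=(k-1)^{1-\alpha}-2k^{1-\alpha}+(k+1)^{1-\alpha}$ for $1\le k\le n-1$. Define $\delta_0^{(\alpha)}=\sigma_0^{(\alpha)}-\zeta(\alpha-1)$, $\delta_1^{(\alpha)}=\sigma_1^{(\alpha)}+2\zeta(\alpha-1)$, $\delta_2^{(\alpha)}=\sigma_2^{(\alpha)}-\zeta(\alpha-1)$, and $\delta_k^{(\alpha)}=\sigma_k^{(\alpha)}$ for $3\le k\le n$, where $\zeta$ is the Riemann zeta function. *)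

theory Defs
  imports "HOL-Analysis.Analysis" "HOL-Computational_Algebra.Polynomial"
begin

definition caputo :: "real \<Rightarrow> (real \<Rightarrow> real) \<Rightarrow> real \<Rightarrow> real" where
  "caputo \<alpha> y x = (1 / Gamma (1 - \<alpha>)) *
     integral {0..x} (\<lambda>\<xi>. deriv y \<xi> / (x - \<xi>) powr \<alpha>)"

text \<open>Riemann zeta function on real arguments s > -1, s \<noteq> 1 (analytic continuation),
  given by the Euler--Maclaurin limit formula; the library has no zeta function.\<close>
definition zeta_real :: "real \<Rightarrow> real" where
  "zeta_real s = lim (\<lambda>N::nat. (\<Sum>k=1..N. real k powr (- s))
                       + real N powr (1 - s) / (s - 1) - real N powr (- s) / 2)"

definition sigma_coef :: "real \<Rightarrow> nat \<Rightarrow> nat \<Rightarrow> real" where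
  "sigma_coef \<alpha> n k =
     (if k = 0 then 1
      else if k = n then real (n - 1) powr (1 - \<alpha>) - real n powr (1 - \<alpha>)
      else real (k - 1) powr (1 - \<alpha>) - 2 * real k powr (1 - \<alpha>) + real (k + 1) powr (1 - \<alpha>))"

definition delta_coef :: "real \<Rightarrow> nat \<Rightarrow> nat \<Rightarrow> real" where
  "delta_coef \<alpha> n k =
     (if k = 0 then sigma_coef \<alpha> n 0 - zeta_real (\<alpha> - 1)
      else if k = 1 then sigma_coef \<alpha> n 1 + 2 * zeta_real (\<alpha> - 1)
      else if k = 2 then sigma_coef \<alpha> n 2 - zeta_real (\<alpha> - 1)
      else sigma_coef \<alpha> n k)"

end

theory Submission
  imports Defs
begin


definition fz :: "real \<Rightarrow> nat \<Rightarrow> real" where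
  "fz \<alpha> N = (\<Sum>k=1..N. real k powr (1-\<alpha>)) + real N powr (2-\<alpha>)/(\<alpha>-2) - real N powr (1-\<alpha>)/2"

lemma zeta_fz: "zeta_real (\<alpha>-1) = lim (fz \<alpha>)"
proof -
  have "(\<lambda>N::nat. (\<Sum>k=1..N. real k powr (- (\<alpha>-1)))
                       + real N powr (1 - (\<alpha>-1)) / ((\<alpha>-1) - 1) - real N powr (- (\<alpha>-1)) / 2) = fz \<alpha>"
    by (rule ext) (simp add: fz_def algebra_simps)
  thus ?thesis by (simp add: zeta_real_def)
qed

lemma trap:
  fixes \<alpha> N :: real
  assumes a: "0 < \<alpha>" "\<alpha> < 1" and N: "N > 0"
  defines "d \<equiv> (N+1) powr (2-\<alpha>)/(2-\<alpha>) - N powr (2-\<alpha>)/(2-\<alpha>) - (N powr (1-\<alpha>) + (N+1) powr (1-\<alpha>))/2"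
  shows "0 \<le> d \<and> d \<le> (1-\<alpha>)/2 * (N powr (-\<alpha>) - (N+1) powr (-\<alpha>))"
proof -
  define E where "E u = u powr (2-\<alpha>)/(2-\<alpha>) - N powr (2-\<alpha>)/(2-\<alpha>) - (u-N)/2*(N powr (1-\<alpha>) + u powr (1-\<alpha>))" for u
  define E' where "E' u = u powr (1-\<alpha>) - (N powr (1-\<alpha>) + u powr (1-\<alpha>))/2 - (u-N)/2*((1-\<alpha>) * u powr (-\<alpha>))" for u
  have dF: "((\<lambda>u. u powr (2-\<alpha>)/(2-\<alpha>)) has_real_derivative u powr (1-\<alpha>)) (at u)" if "u > 0" for u
  proof -
    have "((\<lambda>u. u powr (2-\<alpha>)/(2-\<alpha>)) has_real_derivative ((2-\<alpha>) * u powr (2-\<alpha>-1))/(2-\<alpha>)) (at u)"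
      using has_real_derivative_powr[OF that, of "2-\<alpha>"] by (rule DERIV_cdivide)
    moreover have "((2-\<alpha>) * u powr (2-\<alpha>-1))/(2-\<alpha>) = u powr (1-\<alpha>)" using a by (simp add: field_simps)
    ultimately show ?thesis by simp
  qed
  have df: "((\<lambda>u. u powr (1-\<alpha>)) has_real_derivative (1-\<alpha>) * u powr (-\<alpha>)) (at u)" if "u > 0" for u
  proof -
    have "((\<lambda>u. u powr (1-\<alpha>)) has_real_derivative (1-\<alpha>) * u powr (1-\<alpha>-1)) (at u)"
      by (intro has_real_derivative_powr that)
    thus ?thesis by simp
  qed
  have dE: "(E has_real_derivative E' u) (at u)" if "u > 0" for u
    unfolding E_def E'_def using a that
    apply -
    apply (rule derivative_eq_intros refl | simp)+
    done
  obtain c where c: "N < c" "c < N+1" "E (N+1) - E N = (N+1-N) * E' c"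
    using MVT2[of N "N+1" E E'] dE N by force
  obtain c' where c': "N < c'" "c' < c" "c powr (1-\<alpha>) - N powr (1-\<alpha>) = (c - N) * ((1-\<alpha>) * c' powr (-\<alpha>))"
    using MVT2[of N c "\<lambda>u. u powr (1-\<alpha>)" "\<lambda>u. (1-\<alpha>) * u powr (-\<alpha>)"] df N c by force
  have dE2: "d = E' c" using c by (simp add: E_def d_def)
  have E'c: "E' c = (c-N)/2 * (1-\<alpha>) * (c' powr (-\<alpha>) - c powr (-\<alpha>))"
  proof -
    have "E' c = (c powr (1-\<alpha>) - N powr (1-\<alpha>))/2 - (c-N)/2*((1-\<alpha>)*c powr -\<alpha>)"
      by (simp add: E'_def field_simps)
    also have "\<dots> = (c-N)/2 * (1-\<alpha>) * (c' powr (-\<alpha>) - c powr (-\<alpha>))"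
      unfolding c'(3) by (simp add: field_simps)
    finally show ?thesis .
  qed
  have m1: "c powr (-\<alpha>) \<le> c' powr (-\<alpha>)" using c' N a by (intro powr_mono2') auto
  have m2: "c' powr (-\<alpha>) \<le> N powr (-\<alpha>)" using c' N a by (intro powr_mono2') auto
  have m3: "(N+1) powr (-\<alpha>) \<le> c powr (-\<alpha>)" using c N a by (intro powr_mono2') auto
  have "0 \<le> E' c" unfolding E'c using c a m1 by simp
  moreover have "(c-N) * (c' powr (-\<alpha>) - c powr (-\<alpha>)) \<le> 1 * (N powr (-\<alpha>) - (N+1) powr (-\<alpha>))"
    using c m1 m2 m3 by (intro mult_mono) auto
  hence "E' c \<le> (1-\<alpha>)/2 * (N powr (-\<alpha>) - (N+1) powr (-\<alpha>))"
  proof -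
    have e: "E' c = (1-\<alpha>)/2 * ((c-N) * (c' powr (-\<alpha>) - c powr (-\<alpha>)))" unfolding E'c by simp
    show ?thesis unfolding e using a \<open>(c-N) * _ \<le> _\<close> by (intro mult_left_mono) auto
  qed
  ultimately show ?thesis using dE2 by simp
qed

lemma fz_step:
  assumes a: "0 < \<alpha>" "\<alpha> < 1" and N: "N \<ge> 1"
  shows "0 \<le> fz \<alpha> N - fz \<alpha> (Suc N) \<and> fz \<alpha> N - fz \<alpha> (Suc N) \<le> (1-\<alpha>)/2 * (real N powr (-\<alpha>) - real (Suc N) powr (-\<alpha>))"
proof -
  have "fz \<alpha> N - fz \<alpha> (Suc N) = (real N+1) powr (2-\<alpha>)/(2-\<alpha>) - real N powr (2-\<alpha>)/(2-\<alpha>) - (real N powr (1-\<alpha>) + (real N+1) powr (1-\<alpha>))/2"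
  proof -
    have s: "(\<Sum>k=1..Suc N. real k powr (1-\<alpha>)) = (\<Sum>k=1..N. real k powr (1-\<alpha>)) + (real N + 1) powr (1-\<alpha>)"
      by (simp add: add.commute)
    have m: "y/(\<alpha>-2) = - (y/(2-\<alpha>))" for y by (simp add: divide_simps algebra_simps)
    show ?thesis unfolding fz_def s m by (simp add: add.commute add_divide_distrib)
  qed
  note eq = this
  have Np: "real N > 0" using N by simp
  have r: "real (Suc N) = real N + 1" by simp
  show ?thesis unfolding r using eq trap[OF a Np] by argo
qed

lemma fz_tele:
  assumes a: "0 < \<alpha>" "\<alpha> < 1" and N: "N \<ge> 1"
  shows "0 \<le> fz \<alpha> N - fz \<alpha> (N+j) \<and> fz \<alpha> N - fz \<alpha> (N+j) \<le> (1-\<alpha>)/2 * (real N powr (-\<alpha>) - real (N+j) powr (-\<alpha>))"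
proof (induction j)
  case 0 then show ?case by simp
next
  case (Suc j)
  have Nj: "N + j \<ge> 1" using N by simp
  have e: "(1-\<alpha>)/2 * (real N powr (-\<alpha>) - real (N+j) powr (-\<alpha>)) + (1-\<alpha>)/2 * (real (N+j) powr (-\<alpha>) - real (Suc (N+j)) powr (-\<alpha>))
     = (1-\<alpha>)/2 * (real N powr (-\<alpha>) - real (N+Suc j) powr (-\<alpha>))" by (simp add: algebra_simps)
  from fz_step[OF a Nj] Suc e show ?case by (simp only: add_Suc_right) linarith
qed

lemma zeta_rate:
  assumes a: "0 < \<alpha>" "\<alpha> < 1" and N: "N \<ge> 1"
  shows "0 \<le> fz \<alpha> N - zeta_real (\<alpha>-1) \<and> fz \<alpha> N - zeta_real (\<alpha>-1) \<le> (1-\<alpha>)/2 * real N powr (-\<alpha>)"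
proof -
  have tb: "0 \<le> fz \<alpha> M - fz \<alpha> (M+j) \<and> fz \<alpha> M - fz \<alpha> (M+j) \<le> (1-\<alpha>)/2 * real M powr (-\<alpha>)" if "M \<ge> 1" for M j
  proof -
    have "0 \<le> real (M+j) powr (-\<alpha>)" by simp
    hence "0 \<le> (1-\<alpha>)/2 * real (M+j) powr (-\<alpha>)" using a by simp
    hence "(1-\<alpha>)/2 * (real M powr (-\<alpha>) - real (M+j) powr (-\<alpha>)) \<le> (1-\<alpha>)/2 * real M powr (-\<alpha>)"
      by (simp add: right_diff_distrib)
    thus ?thesis using fz_tele[OF a that, of j] by linarith
  qed
  define g where "g m = fz \<alpha> (Suc m)" for m
  have "decseq g" unfolding decseq_Suc_iff g_def using tb[of "Suc _" 1] by simp
  moreover have "\<forall>i. g 0 - (1-\<alpha>)/2 \<le> g i"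
  proof
    fix i have "fz \<alpha> 1 - fz \<alpha> (Suc i) \<le> (1-\<alpha>)/2" using tb[of 1 i] by simp
    thus "g 0 - (1-\<alpha>)/2 \<le> g i" unfolding g_def by (simp add: field_simps)
  qed
  ultimately obtain L where L: "g \<longlonglongrightarrow> L" by (rule decseq_convergent)
  hence Lf: "fz \<alpha> \<longlonglongrightarrow> L" unfolding g_def by (rule LIMSEQ_imp_Suc)
  hence z: "zeta_real (\<alpha>-1) = L" by (simp add: zeta_fz limI)
  have t: "(\<lambda>j. fz \<alpha> N - fz \<alpha> (j+N)) \<longlonglongrightarrow> fz \<alpha> N - L"
    by (intro tendsto_diff tendsto_const LIMSEQ_ignore_initial_segment Lf)
  have "0 \<le> fz \<alpha> N - L"
    by (rule LIMSEQ_le_const[OF t]) (use tb[OF N] in \<open>auto simp: add.commute\<close>)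
  moreover have "fz \<alpha> N - L \<le> (1-\<alpha>)/2 * real N powr (-\<alpha>)"
    by (rule LIMSEQ_le_const2[OF t]) (use tb[OF N] in \<open>auto simp: add.commute\<close>)
  ultimately show ?thesis using z by simp
qed



definition ff :: "real \<Rightarrow> nat \<Rightarrow> real" where "ff \<alpha> k = real k powr (1-\<alpha>)"

lemma sumparts_aux:
  assumes "Suc j \<le> n"
  shows "(\<Sum>k<Suc j. sigma_coef \<alpha> n k * a k) =
     - (\<Sum>k<Suc j. (a (Suc k) - a k) * (ff \<alpha> (Suc k) - ff \<alpha> k)) + a (Suc j) * (ff \<alpha> (Suc j) - ff \<alpha> j)"
  using assms
proof (induction j)
  case 0
  then show ?case by (simp add: sigma_coef_def ff_def algebra_simps)
next
  case (Suc j)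
  have s: "sigma_coef \<alpha> n (Suc j) = ff \<alpha> j - 2 * ff \<alpha> (Suc j) + ff \<alpha> (Suc (Suc j))"
    using Suc.prems by (simp add: sigma_coef_def ff_def)
  show ?case using Suc by (simp add: s algebra_simps)
qed

lemma sumparts:
  assumes "n \<ge> 1"
  shows "(\<Sum>k=0..n. sigma_coef \<alpha> n k * a k) = - (\<Sum>k<n. (a (Suc k) - a k) * (ff \<alpha> (Suc k) - ff \<alpha> k))"
proof -
  obtain j where n: "n = Suc j" using assms by (cases n) auto
  have "(\<Sum>k=0..n. sigma_coef \<alpha> n k * a k) = (\<Sum>k<Suc j. sigma_coef \<alpha> n k * a k) + sigma_coef \<alpha> n n * a n"
    unfolding n by (simp add: atLeast0AtMost lessThan_Suc_atMost[symmetric])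
  also have "sigma_coef \<alpha> n n = ff \<alpha> j - ff \<alpha> (Suc j)" by (simp add: sigma_coef_def ff_def n)
  finally show ?thesis using sumparts_aux[of j n \<alpha> a] n by (simp add: algebra_simps)
qed

lemma delta_sum:
  assumes "n \<ge> 2"
  shows "(\<Sum>k=0..n. delta_coef \<alpha> n k * b k) = (\<Sum>k=0..n. sigma_coef \<alpha> n k * b k)
      - zeta_real (\<alpha>-1) * (b 0 - 2 * b 1 + b 2)"
proof -
  define z where "z = zeta_real (\<alpha>-1)"
  have "(\<Sum>k=0..n. delta_coef \<alpha> n k * b k) = (\<Sum>k=0..n. sigma_coef \<alpha> n k * b k + 
      (if k = 0 then - z * b 0 else if k = 1 then 2 * z * b 1 else if k = 2 then - z * b 2 else 0))"
    by (rule sum.cong) (auto simp: delta_coef_def z_def algebra_simps)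
  also have "\<dots> = (\<Sum>k=0..n. sigma_coef \<alpha> n k * b k) + (\<Sum>k=0..n. 
      (if k = 0 then - z * b 0 else if k = 1 then 2 * z * b 1 else if k = 2 then - z * b 2 else 0))"
    by (rule sum.distrib)
  also have "(\<Sum>k=0..n. (if k = 0 then - z * b 0 else if k = 1 then 2 * z * b 1 else if k = 2 then - z * b 2 else 0))
      = (\<Sum>k\<in>{0,1,2::nat}. (if k = 0 then - z * b 0 else if k = 1 then 2 * z * b 1 else if k = 2 then - z * b 2 else 0))"
    using assms by (intro sum.mono_neutral_right) auto
  finally show ?thesis by (simp add: z_def algebra_simps)
qed



definition Tsum :: "real \<Rightarrow> nat \<Rightarrow> nat \<Rightarrow> real" where
  "Tsum \<alpha> n i = (\<Sum>k=0..n. sigma_coef \<alpha> n k * real k ^ i)"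

definition Q :: "real \<Rightarrow> nat \<Rightarrow> nat \<Rightarrow> real" where
  "Q \<alpha> n i = (1-\<alpha>)*real i/(real i - \<alpha>) * real n powr (real i - \<alpha>) + Tsum \<alpha> n i
     - zeta_real (\<alpha>-1) * (0^i - 2 + 2^i)"

lemma Q0: assumes "n \<ge> 1" shows "Q \<alpha> n 0 = 0"
proof -
  have "Tsum \<alpha> n 0 = 0" using sumparts[OF assms, of \<alpha> "\<lambda>k. 1"] by (simp add: Tsum_def)
  thus ?thesis by (simp add: Q_def)
qed

lemma Q1: assumes "n \<ge> 1" "\<alpha> < 1" shows "Q \<alpha> n 1 = 0"
proof -
  have "Tsum \<alpha> n 1 = - (\<Sum>k<n. ff \<alpha> (Suc k) - ff \<alpha> k)"
    using sumparts[OF assms(1), of \<alpha> "\<lambda>k. real k"] by (simp add: Tsum_def)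
  also have "\<dots> = - ff \<alpha> n" by (simp only: sum_lessThan_telescope) (simp add: ff_def)
  finally show ?thesis using assms by (simp add: Q_def ff_def)
qed

lemma T2aux: "(\<Sum>k<n. (2*real k+1) * (ff \<alpha> (Suc k) - ff \<alpha> k)) = (2*real n+1) * ff \<alpha> n - 2 * (\<Sum>k=1..n. ff \<alpha> k)"
proof (induction n)
  case 0 then show ?case by (simp add: ff_def)
next
  case (Suc n) then show ?case by (simp add: algebra_simps)
qed

lemma Q2: assumes a: "0 < \<alpha>" "\<alpha> < 1" and n: "n \<ge> 1"
  shows "\<bar>Q \<alpha> n 2\<bar> \<le> (1-\<alpha>) * real n powr (real 2 - 2 - \<alpha>)"
proof -
  have "Tsum \<alpha> n 2 = - (\<Sum>k<n. (2*real k+1) * (ff \<alpha> (Suc k) - ff \<alpha> k))"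
    using sumparts[OF n, of \<alpha> "\<lambda>k. real k ^ 2"] unfolding Tsum_def
    by (simp add: power2_eq_square algebra_simps)
  also have "\<dots> = 2 * (\<Sum>k=1..n. ff \<alpha> k) - (2*real n+1) * ff \<alpha> n" by (simp add: T2aux)
  finally have T: "Tsum \<alpha> n 2 = 2 * (\<Sum>k=1..n. ff \<alpha> k) - (2*real n+1) * ff \<alpha> n" .
  have np: "real n > 0" using n by simp
  have nn: "real n * real n powr (1-\<alpha>) = real n powr (2-\<alpha>)"
    using np by (simp add: powr_add[symmetric] powr_mult_base)
  have "Q \<alpha> n 2 = 2 * (fz \<alpha> n - zeta_real (\<alpha>-1))"
  proof -
    have n2: "real n powr (real 2 - \<alpha>) = real n * real n powr (1-\<alpha>)" using nn by simp
    have n3: "real n powr (2 - \<alpha>) = real n * real n powr (1-\<alpha>)" using nn by simp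
    show ?thesis unfolding Q_def T fz_def ff_def n2 n3 using a by (simp add: field_simps)
  qed
  then show ?thesis using zeta_rate[OF a n] by simp
qed



lemma powdiff:
  fixes a b :: real
  assumes "0 \<le> b" "b \<le> a"
  shows "real (Suc m) * b^m * (a-b) \<le> a^Suc m - b^Suc m \<and> a^Suc m - b^Suc m \<le> real (Suc m) * a^m * (a-b)"
proof (induction m)
  case 0 then show ?case by simp
next
  case (Suc m)
  have e: "a^Suc (Suc m) - b^Suc (Suc m) = a * (a^Suc m - b^Suc m) + b^Suc m * (a - b)"
    by (simp add: algebra_simps)
  have b1: "b * (real (Suc m) * b^m * (a-b)) \<le> a * (a^Suc m - b^Suc m)"
    using Suc assms by (intro mult_mono) (auto simp: mult_nonneg_nonneg)
  have b2: "a * (a^Suc m - b^Suc m) \<le> a * (real (Suc m) * a^m * (a-b))"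
    using Suc assms by (intro mult_left_mono) auto
  have b3: "b^Suc m * (a - b) \<le> a^Suc m * (a-b)"
    using assms by (intro mult_right_mono power_mono) auto
  have "real (Suc (Suc m)) * b^Suc m * (a-b) = b * (real (Suc m) * b^m * (a-b)) + b^Suc m * (a - b)"
    by (simp add: algebra_simps)
  moreover have "real (Suc (Suc m)) * a^Suc m * (a-b) = a * (real (Suc m) * a^m * (a-b)) + a^Suc m * (a - b)"
    by (simp add: algebra_simps)
  ultimately show ?case using e b1 b2 b3 by linarith
qed

lemma phibound:
  fixes k z :: real
  assumes k: "0 \<le> k" and z: "k \<le> z" "z \<le> k+1"
  shows "\<bar>z^Suc (Suc m) - k^Suc (Suc m) - ((k+1)^Suc (Suc m) - k^Suc (Suc m)) * (z-k)\<bar>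
          \<le> real (Suc (Suc m)) * real (Suc m) * (k+1)^m"
proof -
  define t where "t = z - k"
  define A where "A = (k+1)^Suc m"
  define B where "B = k^Suc m"
  define D where "D = (k+1)^Suc (Suc m) - k^Suc (Suc m)"
  define i where "i = real (Suc (Suc m))"
  have t: "0 \<le> t" "t \<le> 1" using z by (auto simp: t_def)
  have zi: "z = k + t" by (simp add: t_def)
  have P1: "i * B * t \<le> z^Suc (Suc m) - k^Suc (Suc m)" "z^Suc (Suc m) - k^Suc (Suc m) \<le> i * z^Suc m * t"
    using powdiff[of k z "Suc m"] k z by (auto simp: i_def B_def t_def)
  have "z^Suc m \<le> A" unfolding A_def using k z by (intro power_mono) auto
  hence P1': "i * z^Suc m * t \<le> i * A * t" using t by (intro mult_right_mono) (auto simp: i_def)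
  have P2: "i * B \<le> D" "D \<le> i * A"
    using powdiff[of k "k+1" "Suc m"] k by (auto simp: i_def B_def A_def D_def)
  have P2t: "i * B * t \<le> D * t" "D * t \<le> i * A * t" using P2 t by (auto intro: mult_right_mono)
  have P3: "A - B \<le> real (Suc m) * (k+1)^m"
    using powdiff[of k "k+1" m] k by (auto simp: A_def B_def)
  have "B \<le> A" unfolding A_def B_def using k by (intro power_mono) auto
  hence AB: "0 \<le> A - B" by simp
  have "i * A * t - i * B * t = i * ((A - B) * t)" by (simp add: algebra_simps)
  also have "\<dots> \<le> i * (A - B)" using AB t mult_left_mono[of t 1 "A-B"] by (intro mult_left_mono) (auto simp: i_def)
  also have "\<dots> \<le> i * (real (Suc m) * (k+1)^m)" using P3 by (intro mult_left_mono) (auto simp: i_def)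
  finally have F: "i * A * t - i * B * t \<le> i * (real (Suc m) * (k+1)^m)" .
  have G: "i * (real (Suc m) * (k+1)^m) = real (Suc (Suc m)) * real (Suc m) * (k+1)^m" by (simp add: i_def)
  show ?thesis unfolding D_def[symmetric] t_def[symmetric] abs_le_iff using P1 P1' P2t F G by linarith
qed



definition phi :: "nat \<Rightarrow> real \<Rightarrow> real \<Rightarrow> real" where
  "phi i k z = z^i - k^i - ((k+1)^i - k^i)*(z-k)"

definition ek :: "real \<Rightarrow> nat \<Rightarrow> real \<Rightarrow> real" where
  "ek \<alpha> i k = real i/(real i-\<alpha>)*((k+1) powr (real i-\<alpha>) - k powr (real i-\<alpha>))
     - ((k+1)^i - k^i)*((k+1) powr (1-\<alpha>) - k powr (1-\<alpha>))/(1-\<alpha>)"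

lemma ek_mvt:
  fixes k :: real and i :: nat
  assumes a: "0 < \<alpha>" "\<alpha> < 1" and k: "k > 0" and i: "i \<ge> 1"
  shows "\<exists>z. k < z \<and> z < k+1 \<and> ek \<alpha> i k = \<alpha> * phi i k z * z powr (-\<alpha>-1)"
proof -
  define D where "D = (k+1)^i - k^i"
  define H where "H u = real i/(real i-\<alpha>)* u powr (real i-\<alpha>) - D/(1-\<alpha>)* u powr(1-\<alpha>) - (u^i - k^i - D*(u-k)) * u powr(-\<alpha>)" for u
  have ia: "real i - \<alpha> > 0" using i a by simp
  have dH: "(H has_real_derivative \<alpha> * phi i k u * u powr (-\<alpha>-1)) (at u)" if u: "u > 0" for u
  proof -
    have pw: "u powr (real i - \<alpha> - 1) = u^(i-1) * u powr (-\<alpha>)"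
    proof -
      obtain j where j: "i = Suc j" using i by (cases i) auto
      have "real i - \<alpha> - 1 = real (i-1) + (-\<alpha>)" unfolding j by simp
      hence "u powr (real i - \<alpha> - 1) = u powr (real (i-1) + (-\<alpha>))" by (rule arg_cong)
      also have "\<dots> = u^(i-1) * u powr (-\<alpha>)" by (simp only: powr_add powr_realpow[OF u])
      finally show ?thesis .
    qed
    have d1: "((\<lambda>u. u powr (real i - \<alpha>)) has_real_derivative (real i - \<alpha>) * u powr (real i - \<alpha> - 1)) (at u)"
      by (rule has_real_derivative_powr[OF u])
    have d2: "((\<lambda>u. u powr (1 - \<alpha>)) has_real_derivative (1 - \<alpha>) * u powr (-\<alpha>)) (at u)"
      using has_real_derivative_powr[OF u, of "1-\<alpha>"] unfolding diff_diff_eq2 add_diff_cancel_left' by simp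
    have d3: "((\<lambda>u. u powr (- \<alpha>)) has_real_derivative (-\<alpha>) * u powr (-\<alpha>-1)) (at u)"
      by (rule has_real_derivative_powr[OF u])
    have d4: "((\<lambda>u. u^i - k^i - D*(u-k)) has_real_derivative real i * u^(i-1) - D) (at u)"
    proof -
      have "((\<lambda>u. u^i - k^i - D*(u-k)) has_real_derivative real i * u^(i - Suc 0) - 0 - D*(1-0)) (at u)"
        by (intro DERIV_diff DERIV_pow DERIV_const DERIV_cmult DERIV_ident)
      thus ?thesis by simp
    qed
    have "(H has_real_derivative
       real i/(real i-\<alpha>) * ((real i - \<alpha>) * u powr (real i - \<alpha> - 1)) - D/(1-\<alpha>) * ((1 - \<alpha>) * u powr (-\<alpha>))
       - ((real i * u^(i-1) - D) * u powr (-\<alpha>) + ((-\<alpha>) * u powr (-\<alpha>-1)) * (u^i - k^i - D*(u-k)))) (at u)"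
      unfolding H_def by (intro DERIV_diff DERIV_cmult DERIV_mult d1 d2 d3 d4)
    moreover have "real i/(real i-\<alpha>) * ((real i - \<alpha>) * u powr (real i - \<alpha> - 1)) - D/(1-\<alpha>) * ((1 - \<alpha>) * u powr (-\<alpha>))
       - ((real i * u^(i-1) - D) * u powr (-\<alpha>) + ((-\<alpha>) * u powr (-\<alpha>-1)) * (u^i - k^i - D*(u-k)))
       = \<alpha> * phi i k u * u powr (-\<alpha>-1)"
    proof -
      have e1: "real i/(real i-\<alpha>) * ((real i - \<alpha>) * X) = real i * X" for X using ia by simp
      have e2: "D/(1-\<alpha>) * ((1 - \<alpha>) * X) = D * X" for X using a by simp
      show ?thesis unfolding e1 e2 pw phi_def D_def[symmetric] by (simp add: algebra_simps)
    qed
    ultimately show ?thesis by (rule DERIV_cong)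
  qed
  obtain z where z: "k < z" "z < k+1" "H (k+1) - H k = (k+1-k) * (\<alpha> * phi i k z * z powr (-\<alpha>-1))"
    using MVT2[of k "k+1" H "\<lambda>u. \<alpha> * phi i k u * u powr (-\<alpha>-1)"] dH k by force
  have "H (k+1) - H k = ek \<alpha> i k"
  proof -
    have h1: "H (k+1) = real i/(real i-\<alpha>)* (k+1) powr (real i-\<alpha>) - D/(1-\<alpha>)* (k+1) powr(1-\<alpha>)"
      unfolding H_def D_def by simp
    have h2: "H k = real i/(real i-\<alpha>)* k powr (real i-\<alpha>) - D/(1-\<alpha>)* k powr(1-\<alpha>)"
      unfolding H_def by simp
    show ?thesis unfolding h1 h2 ek_def D_def[symmetric] by (simp add: algebra_simps diff_divide_distrib)
  qed
  thus ?thesis using z by auto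
qed

lemma ek_bound:
  assumes a: "0 < \<alpha>" "\<alpha> < 1" and k: "1 \<le> k" "k \<le> n"
  shows "\<bar>ek \<alpha> (Suc (Suc (Suc l))) (real k)\<bar> \<le> \<alpha> * (real (Suc (Suc (Suc l))) * real (Suc (Suc l)) * 2^Suc l) * real n ^ l * real k powr (-\<alpha>)"
proof -
  define i where "i = Suc (Suc (Suc l))"
  have kp: "real k > 0" using k by simp
  obtain z where z: "real k < z" "z < real k + 1" "ek \<alpha> i (real k) = \<alpha> * phi i (real k) z * z powr (-\<alpha>-1)"
    using ek_mvt[OF a kp, of i] by (auto simp: i_def)
  have pb: "\<bar>phi i (real k) z\<bar> \<le> real i * real (Suc (Suc l)) * (real k+1)^Suc l"
    using phibound[of "real k" z "Suc l"] z unfolding phi_def i_def by auto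
  have zp: "z powr (-\<alpha>-1) \<le> real k powr (-\<alpha>-1)" using z kp a by (intro powr_mono2') auto
  have k2: "(real k+1)^Suc l \<le> 2^Suc l * real k ^ Suc l"
  proof -
    have "(real k+1)^Suc l \<le> (2 * real k)^Suc l" using k by (intro power_mono) auto
    moreover have "(2 * real k)^Suc l = 2^Suc l * real k ^ Suc l" by (rule power_mult_distrib)
    ultimately show ?thesis by (simp only:)
  qed
  have kk: "real k ^ Suc l * real k powr (-\<alpha>-1) = real k ^ l * real k powr (-\<alpha>)"
  proof -
    have "real k powr (-\<alpha>) = real k * real k powr (-\<alpha>-1)"
      using powr_mult_base[of "real k" "-\<alpha>-1"] by simp
    thus ?thesis by simp
  qed
  have kn: "real k ^ l \<le> real n ^ l" using k by (intro power_mono) auto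
  have "\<bar>ek \<alpha> i (real k)\<bar> = \<alpha> * \<bar>phi i (real k) z\<bar> * z powr (-\<alpha>-1)"
    using z a by (simp add: abs_mult)
  also have "\<dots> \<le> \<alpha> * (real i * real (Suc (Suc l)) * (2^Suc l * real k ^ Suc l)) * real k powr (-\<alpha>-1)"
  proof -
    have "\<bar>phi i (real k) z\<bar> \<le> real i * real (Suc (Suc l)) * (2^Suc l * real k ^ Suc l)"
      using pb k2 by (meson order_trans mult_left_mono of_nat_0_le_iff mult_nonneg_nonneg)
    thus ?thesis using zp a by (intro mult_mono) auto
  qed
  also have "\<dots> = \<alpha> * (real i * real (Suc (Suc l)) * 2^Suc l) * (real k ^ Suc l * real k powr (-\<alpha>-1))"
    by (simp add: algebra_simps)
  also have "\<dots> = \<alpha> * (real i * real (Suc (Suc l)) * 2^Suc l) * (real k ^ l * real k powr (-\<alpha>))"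
    unfolding kk ..
  also have "\<dots> \<le> \<alpha> * (real i * real (Suc (Suc l)) * 2^Suc l) * (real n ^ l * real k powr (-\<alpha>))"
    using kn a by (intro mult_left_mono mult_right_mono) auto
  finally show ?thesis by (simp add: i_def algebra_simps)
qed

lemma sum_powr_neg:
  assumes a: "0 < \<alpha>" "\<alpha> < 1"
  shows "(\<Sum>k=1..m. real k powr (-\<alpha>)) \<le> real m powr (1-\<alpha>) / (1-\<alpha>)"
proof (induction m)
  case 0 then show ?case by simp
next
  case (Suc m)
  have step: "real (Suc m) powr (-\<alpha>) \<le> (real (Suc m) powr (1-\<alpha>) - real m powr (1-\<alpha>)) / (1-\<alpha>)"
  proof (cases "m = 0")
    case True then show ?thesis using a by simp
  next
    case False
    hence mp: "real m > 0" by simp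
    have df: "((\<lambda>u. u powr (1-\<alpha>)) has_real_derivative (1-\<alpha>) * u powr (-\<alpha>)) (at u)" if "u > 0" for u
      using has_real_derivative_powr[OF that, of "1-\<alpha>"] unfolding diff_diff_eq2 add_diff_cancel_left' by simp
    obtain c where c: "real m < c" "c < real m + 1"
      "(real m + 1) powr (1-\<alpha>) - real m powr (1-\<alpha>) = (real m + 1 - real m) * ((1-\<alpha>) * c powr (-\<alpha>))"
      using MVT2[of "real m" "real m + 1" "\<lambda>u. u powr (1-\<alpha>)" "\<lambda>u. (1-\<alpha>) * u powr (-\<alpha>)"] df mp by force
    have "(real m + 1) powr (-\<alpha>) \<le> c powr (-\<alpha>)" using c mp a by (intro powr_mono2') auto
    hence "(1-\<alpha>) * (real m + 1) powr (-\<alpha>) \<le> (1-\<alpha>) * c powr (-\<alpha>)" using a by (intro mult_left_mono) auto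
    hence "(1-\<alpha>) * real (Suc m) powr (-\<alpha>) \<le> real (Suc m) powr (1-\<alpha>) - real m powr (1-\<alpha>)"
      using c(3) by (simp add: add.commute)
    thus ?thesis using a by (simp add: pos_le_divide_eq mult.commute)
  qed
  show ?case using Suc step by (simp add: diff_divide_distrib)
qed



lemma Q_ek:
  assumes a: "0 < \<alpha>" "\<alpha> < 1" and n: "n \<ge> 1" and i: "i \<ge> 1"
  shows "Q \<alpha> n i = (1-\<alpha>) * (\<Sum>k<n. ek \<alpha> i (real k)) - zeta_real (\<alpha>-1) * (2^i - 2)"
proof -
  have T: "Tsum \<alpha> n i = - (\<Sum>k<n. (real (Suc k)^i - real k^i) * (ff \<alpha> (Suc k) - ff \<alpha> k))"
    using sumparts[OF n, of \<alpha> "\<lambda>k. real k ^ i"] by (simp add: Tsum_def)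
  have tel: "real n powr (real i - \<alpha>) = (\<Sum>k<n. (real k + 1) powr (real i - \<alpha>) - real k powr (real i - \<alpha>))"
    using sum_lessThan_telescope[of "\<lambda>k. real k powr (real i - \<alpha>)" n] by (simp add: add.commute)
  have "(1-\<alpha>) * (\<Sum>k<n. ek \<alpha> i (real k)) = (\<Sum>k<n. (1-\<alpha>) * ek \<alpha> i (real k))"
    by (simp add: sum_distrib_left)
  also have "\<dots> = (\<Sum>k<n. (1-\<alpha>)*real i/(real i - \<alpha>) * ((real k + 1) powr (real i - \<alpha>) - real k powr (real i - \<alpha>))
      - (real (Suc k)^i - real k^i) * (ff \<alpha> (Suc k) - ff \<alpha> k))"
    using a by (intro sum.cong refl) (simp add: ek_def ff_def field_simps)
  also have "\<dots> = (1-\<alpha>)*real i/(real i - \<alpha>) * real n powr (real i - \<alpha>) + Tsum \<alpha> n i"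
    unfolding T tel sum_subtractf sum_distrib_left[symmetric] by (simp add: sum_divide_distrib[symmetric] sum_distrib_left[symmetric])
  finally show ?thesis using i by (simp add: Q_def)
qed

lemma Qbig:
  fixes l n :: nat
  assumes a: "0 < \<alpha>" "\<alpha> < 1" and n: "n \<ge> 1"
  defines "i \<equiv> Suc (Suc (Suc l))"
  shows "\<bar>Q \<alpha> n i\<bar> \<le> ((1-\<alpha>) * (real i/(real i-\<alpha>) + 1/(1-\<alpha>)) + \<alpha> * (real i * real (Suc (Suc l)) * 2^Suc l)
      + \<bar>zeta_real (\<alpha>-1)\<bar> * 2^i) * real n powr (real i - 2 - \<alpha>)"
proof -
  define c0 where "c0 = real i/(real i-\<alpha>) + 1/(1-\<alpha>)"
  define c1 where "c1 = \<alpha> * (real i * real (Suc (Suc l)) * 2^Suc l)"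
  define z where "z = zeta_real (\<alpha>-1)"
  define NN where "NN = real n powr (real i - 2 - \<alpha>)"
  have ia: "real i - \<alpha> > 0" using a by (simp add: i_def)
  have NN1: "1 \<le> NN" unfolding NN_def using n a by (intro ge_one_powr_ge_zero) (auto simp: i_def)
  have e0: "\<bar>ek \<alpha> i 0\<bar> \<le> c0"
  proof -
    have "ek \<alpha> i 0 = real i/(real i-\<alpha>) - 1/(1-\<alpha>)" unfolding ek_def by (simp add: i_def)
    thus ?thesis unfolding c0_def using ia a by (simp add: abs_le_iff)
  qed
  have eb: "\<bar>ek \<alpha> i (real k)\<bar> \<le> c1 * real n ^ l * real k powr (-\<alpha>)" if "k \<in> {1..<n}" for k
    using ek_bound[OF a, of k n l] that unfolding c1_def i_def by auto
  have sp: "(\<Sum>k\<in>{1..<n}. real k powr (-\<alpha>)) \<le> real n powr (1-\<alpha>) / (1-\<alpha>)"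
  proof -
    have "{1..<n} = {1..n-1}" using n by auto
    hence "(\<Sum>k\<in>{1..<n}. real k powr (-\<alpha>)) \<le> real (n-1) powr (1-\<alpha>) / (1-\<alpha>)"
      using sum_powr_neg[OF a, of "n-1"] by simp
    also have "\<dots> \<le> real n powr (1-\<alpha>) / (1-\<alpha>)" using a
      by (intro divide_right_mono powr_mono2) auto
    finally show ?thesis .
  qed
  have nl: "real n ^ l * real n powr (1-\<alpha>) = NN"
  proof -
    have "real n ^ l = real n powr real l" using n by (simp add: powr_realpow)
    hence "real n ^ l * real n powr (1-\<alpha>) = real n powr (real l + (1-\<alpha>))" by (simp add: powr_add)
    thus ?thesis unfolding NN_def i_def by (simp add: algebra_simps)
  qed
  have c1p: "c1 \<ge> 0" unfolding c1_def using a by simp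
  have split: "(\<Sum>k<n. ek \<alpha> i (real k)) = ek \<alpha> i 0 + (\<Sum>k\<in>{1..<n}. ek \<alpha> i (real k))"
  proof -
    have "{..<n} = insert 0 {1..<n}" using n by auto
    thus ?thesis by simp
  qed
  have "\<bar>\<Sum>k\<in>{1..<n}. ek \<alpha> i (real k)\<bar> \<le> (\<Sum>k\<in>{1..<n}. c1 * real n ^ l * real k powr (-\<alpha>))"
    by (rule order_trans[OF sum_abs sum_mono]) (rule eb)
  also have "\<dots> = c1 * real n ^ l * (\<Sum>k\<in>{1..<n}. real k powr (-\<alpha>))" by (simp add: sum_distrib_left)
  also have "\<dots> \<le> c1 * real n ^ l * (real n powr (1-\<alpha>) / (1-\<alpha>))"
    using c1p by (intro mult_left_mono sp) auto
  also have "\<dots> = c1 / (1-\<alpha>) * NN" unfolding nl[symmetric] by simp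
  finally have s1: "\<bar>\<Sum>k\<in>{1..<n}. ek \<alpha> i (real k)\<bar> \<le> c1 / (1-\<alpha>) * NN" .
  have S: "\<bar>\<Sum>k<n. ek \<alpha> i (real k)\<bar> \<le> c0 + c1/(1-\<alpha>) * NN" unfolding split using e0 s1 by linarith
  have Qe: "Q \<alpha> n i = (1-\<alpha>) * (\<Sum>k<n. ek \<alpha> i (real k)) - z * (2^i - 2)"
    using Q_ek[OF a n] unfolding z_def i_def by simp
  have "\<bar>Q \<alpha> n i\<bar> \<le> (1-\<alpha>) * \<bar>\<Sum>k<n. ek \<alpha> i (real k)\<bar> + \<bar>z\<bar> * 2^i"
  proof -
    have "\<bar>z * (2^i - 2)\<bar> \<le> \<bar>z\<bar> * 2^i"
    proof -
      have l1: "(1::real) \<le> 2^l" by simp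
      have "(2::real)^i = 8 * 2^l" by (simp add: i_def)
      hence "(2::real) \<le> 2^i" using l1 by linarith
      hence "\<bar>(2::real)^i - 2\<bar> \<le> 2^i" by simp
      thus ?thesis by (simp add: abs_mult mult_left_mono)
    qed
    moreover have "\<bar>(1-\<alpha>) * (\<Sum>k<n. ek \<alpha> i (real k))\<bar> = (1-\<alpha>) * \<bar>\<Sum>k<n. ek \<alpha> i (real k)\<bar>"
      using a by (simp add: abs_mult)
    ultimately show ?thesis unfolding Qe by linarith
  qed
  also have "\<dots> \<le> (1-\<alpha>) * (c0 + c1/(1-\<alpha>) * NN) + \<bar>z\<bar> * 2^i"
    using S a by (intro add_right_mono mult_left_mono) auto
  also have "\<dots> = (1-\<alpha>) * c0 + c1 * NN + \<bar>z\<bar> * 2^i" using a by (simp add: field_simps)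
  also have "\<dots> \<le> ((1-\<alpha>) * c0 + c1 + \<bar>z\<bar> * 2^i) * NN"
  proof -
    have c0p: "0 \<le> (1-\<alpha>) * c0" unfolding c0_def using a ia by simp
    have "(1-\<alpha>) * c0 \<le> (1-\<alpha>) * c0 * NN" using c0p NN1 mult_left_mono[of 1 NN] by force
    moreover have "\<bar>z\<bar> * 2^i \<le> \<bar>z\<bar> * 2^i * NN" using NN1 mult_left_mono[of 1 NN "\<bar>z\<bar> * 2^i"] by force
    ultimately show ?thesis by (simp add: algebra_simps)
  qed
  finally show ?thesis unfolding c0_def c1_def z_def NN_def .
qed

lemma Qall:
  assumes a: "0 < \<alpha>" "\<alpha> < 1"
  shows "\<exists>K. \<forall>n\<ge>1. \<bar>Q \<alpha> n i\<bar> \<le> K * real n powr (real i - 2 - \<alpha>)"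
proof (cases "i \<le> 2")
  case True
  then consider "i = 0" | "i = 1" | "i = 2" by force
  then show ?thesis
  proof cases
    case 1
    have "\<forall>n\<ge>1. \<bar>Q \<alpha> n i\<bar> \<le> 0 * real n powr (real i - 2 - \<alpha>)"
      unfolding 1 by (simp add: Q0)
    then show ?thesis by (rule exI)
  next
    case 2
    have "\<forall>n\<ge>1. \<bar>Q \<alpha> n i\<bar> \<le> 0 * real n powr (real i - 2 - \<alpha>)"
      unfolding 2
    proof (intro allI impI)
      fix n :: nat assume "1 \<le> n"
      show "\<bar>Q \<alpha> n 1\<bar> \<le> 0 * real n powr (real 1 - 2 - \<alpha>)" using Q1[OF \<open>1 \<le> n\<close> a(2)] by simp
    qed
    then show ?thesis by (rule exI)
  next
    case 3
    have "\<forall>n\<ge>1. \<bar>Q \<alpha> n i\<bar> \<le> (1-\<alpha>) * real n powr (real i - 2 - \<alpha>)"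
      unfolding 3 using Q2[OF a] by blast
    then show ?thesis by blast
  qed
next
  case False
  define l where "l = i - 3"
  have i: "i = Suc (Suc (Suc l))" using False unfolding l_def by arith
  have "\<forall>n\<ge>1. \<bar>Q \<alpha> n i\<bar> \<le> ((1-\<alpha>) * (real i/(real i-\<alpha>) + 1/(1-\<alpha>)) + \<alpha> * (real i * real (Suc (Suc l)) * 2^Suc l)
      + \<bar>zeta_real (\<alpha>-1)\<bar> * 2^i) * real n powr (real i - 2 - \<alpha>)"
  proof (intro allI impI)
    fix n :: nat assume n: "1 \<le> n"
    show "\<bar>Q \<alpha> n i\<bar> \<le> ((1-\<alpha>) * (real i/(real i-\<alpha>) + 1/(1-\<alpha>)) + \<alpha> * (real i * real (Suc (Suc l)) * 2^Suc l)
      + \<bar>zeta_real (\<alpha>-1)\<bar> * 2^i) * real n powr (real i - 2 - \<alpha>)"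
      using Qbig[OF a n, of l] unfolding i[symmetric] .
  qed
  thus ?thesis by blast
qed


lemma int_term:
  fixes x \<alpha> :: real and i :: nat
  assumes a: "0 < \<alpha>" "\<alpha> < 1" and x: "x > 0"
  shows "((\<lambda>\<xi>. - real i * (x-\<xi>)^(i-1) / (x-\<xi>) powr \<alpha>) has_integral (-(real i/(real i-\<alpha>)) * x powr (real i-\<alpha>))) {0..x}"
proof (cases "i = 0")
  case True then show ?thesis by simp
next
  case False
  then obtain j where j: "i = Suc j" by (cases i) auto
  have ia: "real i - \<alpha> > 0" using a j by simp
  define F where "F \<xi> = real i/(real i-\<alpha>) * (x-\<xi>) powr (real i-\<alpha>)" for \<xi>
  have cont: "continuous_on {0..x} F"
    unfolding F_def using ia
    by (intro continuous_on_mult continuous_on_const continuous_on_powr' continuous_on_diff continuous_on_id) auto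
  have der: "(F has_vector_derivative (- real i * (x-\<xi>) powr (real i - \<alpha> - 1))) (at \<xi>)" if "\<xi> \<in> {0<..<x}" for \<xi>
  proof -
    have d0: "((\<lambda>\<xi>. x - \<xi>) has_real_derivative (0 - 1)) (at \<xi>)" by (intro DERIV_diff DERIV_const DERIV_ident)
    have "(F has_real_derivative real i/(real i-\<alpha>) * ((real i-\<alpha>) * (x-\<xi>) powr (real i-\<alpha> - of_nat 1) * (0-1))) (at \<xi>)"
      unfolding F_def using that by (intro DERIV_cmult DERIV_fun_powr d0) auto
    moreover have "real i/(real i-\<alpha>) * ((real i-\<alpha>) * (x-\<xi>) powr (real i-\<alpha> - of_nat 1) * (0-1)) = - real i * (x-\<xi>) powr (real i - \<alpha> - 1)"
      using ia by simp
    ultimately show ?thesis unfolding has_real_derivative_iff_has_vector_derivative[symmetric] by (rule DERIV_cong)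
  qed
  have I: "((\<lambda>\<xi>. - real i * (x-\<xi>) powr (real i - \<alpha> - 1)) has_integral (F x - F 0)) {0..x}"
    using fundamental_theorem_of_calculus_interior[OF _ cont der] x by simp
  have Fv: "F x - F 0 = -(real i/(real i-\<alpha>)) * x powr (real i-\<alpha>)" unfolding F_def by simp
  have eq: "- real i * (x-\<xi>)^(i-1) / (x-\<xi>) powr \<alpha> = - real i * (x-\<xi>) powr (real i - \<alpha> - 1)"
    if "\<xi> \<in> box 0 x" for \<xi>
  proof -
    have p: "x - \<xi> > 0" using that by (simp add: box_real)
    have "(x-\<xi>)^(i-1) = (x-\<xi>) powr real j" using p j by (simp add: powr_realpow)
    hence "(x-\<xi>)^(i-1) / (x-\<xi>) powr \<alpha> = (x-\<xi>) powr (real j - \<alpha>)" by (simp add: powr_diff)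
    moreover have "real j - \<alpha> = real i - \<alpha> - 1" using j by simp
    ultimately have "(x-\<xi>)^(i-1) / (x-\<xi>) powr \<alpha> = (x-\<xi>) powr (real i - \<alpha> - 1)" by simp
    thus ?thesis by (simp add: mult.assoc times_divide_eq_right[symmetric] del: times_divide_eq_right)
  qed
  show ?thesis
    using has_integral_spike_interior[of "\<lambda>\<xi>. - real i * (x-\<xi>) powr (real i - \<alpha> - 1)" "F x - F 0" 0 x] I eq Fv
    by (simp add: cbox_interval)
qed



lemma poly_rep:
  fixes p :: "real poly" and x \<xi> :: real
  shows "poly p \<xi> = (\<Sum>i\<le>degree (pcompose p [:x, -1:]). coeff (pcompose p [:x, -1:]) i * (x-\<xi>)^i)"
proof -
  have "poly (pcompose p [:x, -1:]) (x-\<xi>) = poly p \<xi>" by (simp add: poly_pcompose)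
  thus ?thesis by (simp add: poly_altdef)
qed

lemma deriv_rep:
  fixes p :: "real poly" and x \<xi> :: real
  shows "deriv (poly p) \<xi> = (\<Sum>i\<le>degree (pcompose p [:x, -1:]). coeff (pcompose p [:x, -1:]) i * (- real i * (x-\<xi>)^(i-1)))"
proof -
  define q where "q = pcompose p [:x, -1:]"
  have e: "poly p = (\<lambda>\<xi>. \<Sum>i\<le>degree q. coeff q i * (x-\<xi>)^i)"
    unfolding q_def by (rule ext) (rule poly_rep)
  have d0: "((\<lambda>\<xi>. x - \<xi>) has_real_derivative (0 - 1)) (at \<xi>)" by (intro DERIV_diff DERIV_const DERIV_ident)
  have "((\<lambda>\<xi>. \<Sum>i\<le>degree q. coeff q i * (x-\<xi>)^i) has_real_derivative
      (\<Sum>i\<le>degree q. coeff q i * (of_nat i * ((0-1) * (x-\<xi>)^(i - Suc 0))))) (at \<xi>)"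
    by (intro DERIV_sum DERIV_cmult DERIV_power d0)
  hence "deriv (poly p) \<xi> = (\<Sum>i\<le>degree q. coeff q i * (of_nat i * ((0-1) * (x-\<xi>)^(i - Suc 0))))"
    unfolding e by (rule DERIV_imp_deriv)
  thus ?thesis unfolding q_def by simp
qed


lemma alg: "(a::real)/G * (-r*(B*A)) - 1/G*A*W = -(A/G)*(a*r*B + W)"
  by (cases "G = 0") (simp_all add: field_simps)

lemma alg2: "1/((G::real)/(1-a)) * (-r * XX) - 1/(G*P)*(Hh*W) = (1-a)/G*(-r*XX) - 1/G*(Hh/P)*W"
  by (cases "G = 0"; cases "P = 0"; cases "a = 1") (simp_all add: field_simps)

lemma alg3: "(A::real)*B/G * (K * N) = K/G * (A*(B*N))"
  by (simp add: field_simps)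

theorem corollary7:
  fixes \<alpha> x :: real and p :: "real poly"
  assumes "0 < \<alpha>" and "\<alpha> < 1" and "0 < x"
  shows "\<exists>C. \<exists>N\<ge>2. \<forall>n\<ge>N.
           \<bar>caputo \<alpha> (poly p) x
             - (1 / (Gamma (2 - \<alpha>) * (x / real n) powr \<alpha>)) *
               (\<Sum>k=0..n. delta_coef \<alpha> n k * poly p (real (n - k) * (x / real n)))\<bar>
           \<le> C * (x / real n)^2"
proof -
  note a = assms(1,2)
  have x: "x > 0" by fact
  define q where "q = pcompose p [:x, -1:]"
  define d where "d = degree q"
  define c where "c i = coeff q i" for i
  define z where "z = zeta_real (\<alpha>-1)"
  have "\<forall>i. \<exists>K. \<forall>n\<ge>1. \<bar>Q \<alpha> n i\<bar> \<le> K * real n powr (real i - 2 - \<alpha>)" using Qall[OF a] by blast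
  then obtain K where K: "\<And>i n. n \<ge> 1 \<Longrightarrow> \<bar>Q \<alpha> n i\<bar> \<le> K i * real n powr (real i - 2 - \<alpha>)" by metis
  define G2 where "G2 = Gamma (2-\<alpha>)"
  have G2p: "G2 > 0" unfolding G2_def using a by simp
  have G12: "Gamma (1-\<alpha>) = G2 / (1-\<alpha>)"
  proof -
    have "1-\<alpha> \<notin> \<int>\<^sub>\<le>\<^sub>0" using a nonpos_Ints_nonpos by fastforce
    from Gamma_plus1[OF this] have "Gamma (1-\<alpha>+1) = (1-\<alpha>) * Gamma (1-\<alpha>)" .
    moreover have "1-\<alpha>+1 = 2-\<alpha>" by simp
    ultimately show ?thesis unfolding G2_def using a by (simp add: field_simps)
  qed
  define I where "I i = -(real i/(real i-\<alpha>)) * x powr (real i-\<alpha>)" for i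
  have cap: "caputo \<alpha> (poly p) x = 1/Gamma(1-\<alpha>) * (\<Sum>i\<le>d. c i * I i)"
  proof -
    have fe: "(\<lambda>\<xi>. deriv (poly p) \<xi> / (x - \<xi>) powr \<alpha>) =
        (\<lambda>\<xi>. \<Sum>i\<le>d. c i * (- real i * (x-\<xi>)^(i-1) / (x-\<xi>) powr \<alpha>))"
    proof
      fix \<xi>
      have "deriv (poly p) \<xi> = (\<Sum>i\<le>d. c i * (- real i * (x-\<xi>)^(i-1)))"
        unfolding d_def c_def q_def by (rule deriv_rep)
      thus "deriv (poly p) \<xi> / (x - \<xi>) powr \<alpha> = (\<Sum>i\<le>d. c i * (- real i * (x-\<xi>)^(i-1) / (x-\<xi>) powr \<alpha>))"
        by (simp add: sum_divide_distrib)
    qed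
    have "((\<lambda>\<xi>. \<Sum>i\<le>d. c i * (- real i * (x-\<xi>)^(i-1) / (x-\<xi>) powr \<alpha>)) has_integral (\<Sum>i\<le>d. c i * I i)) {0..x}"
      unfolding I_def by (intro has_integral_sum has_integral_mult_right int_term a x) auto
    hence "integral {0..x} (\<lambda>\<xi>. deriv (poly p) \<xi> / (x - \<xi>) powr \<alpha>) = (\<Sum>i\<le>d. c i * I i)"
      unfolding fe by (rule integral_unique)
    thus ?thesis by (simp add: caputo_def)
  qed
  show ?thesis
  proof (intro exI conjI allI impI)
    show "2 \<le> (2::nat)" by simp
    fix n :: nat assume n: "2 \<le> n"
    define h where "h = x / real n"
    have np: "real n > 0" using n by simp
    have hp: "h > 0" unfolding h_def using np x by simp
    have xnh: "x = real n * h" unfolding h_def using np by simp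
    have pk: "poly p (real (n - k) * h) = (\<Sum>i\<le>d. c i * (real k * h)^i)" if "k \<in> {0..n}" for k
    proof -
      have "x - real (n - k) * h = real k * h" using that unfolding xnh by (simp add: of_nat_diff algebra_simps)
      thus ?thesis using poly_rep[of p "real (n - k) * h" x] unfolding q_def d_def c_def by simp
    qed
    have app: "(\<Sum>k=0..n. delta_coef \<alpha> n k * poly p (real (n - k) * h)) =
        (\<Sum>i\<le>d. c i * h^i * (Tsum \<alpha> n i - z * (0^i - 2 + 2^i)))"
    proof -
      have "(\<Sum>k=0..n. delta_coef \<alpha> n k * poly p (real (n - k) * h)) =
          (\<Sum>k=0..n. \<Sum>i\<le>d. c i * h^i * (delta_coef \<alpha> n k * real k ^ i))"
      proof (rule sum.cong[OF refl])
        fix k assume k: "k \<in> {0..n}"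
        show "delta_coef \<alpha> n k * poly p (real (n - k) * h) = (\<Sum>i\<le>d. c i * h^i * (delta_coef \<alpha> n k * real k ^ i))"
          unfolding pk[OF k] by (simp add: sum_distrib_left power_mult_distrib algebra_simps)
      qed
      also have "\<dots> = (\<Sum>i\<le>d. \<Sum>k=0..n. c i * h^i * (delta_coef \<alpha> n k * real k ^ i))" by (rule sum.swap)
      also have "\<dots> = (\<Sum>i\<le>d. c i * h^i * (\<Sum>k=0..n. delta_coef \<alpha> n k * real k ^ i))"
        by (simp add: sum_distrib_left)
      also have "\<dots> = (\<Sum>i\<le>d. c i * h^i * (Tsum \<alpha> n i - z * (0^i - 2 + 2^i)))"
        using delta_sum[OF n, of \<alpha> "\<lambda>k. real k ^ i" for i] by (simp add: Tsum_def z_def)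
      finally show ?thesis .
    qed
    define X where "X i = 1/Gamma(1-\<alpha>) * I i - 1/(G2 * h powr \<alpha>) * (h^i * (Tsum \<alpha> n i - z * (0^i - 2 + 2^i)))" for i
    have diff: "caputo \<alpha> (poly p) x - (1 / (Gamma (2 - \<alpha>) * h powr \<alpha>)) *
               (\<Sum>k=0..n. delta_coef \<alpha> n k * poly p (real (n - k) * h)) = (\<Sum>i\<le>d. c i * X i)"
    proof -
      have "(\<Sum>i\<le>d. c i * X i) = (\<Sum>i\<le>d. 1/Gamma(1-\<alpha>) * (c i * I i) - 1/(G2 * h powr \<alpha>) * (c i * h^i * (Tsum \<alpha> n i - z * (0^i - 2 + 2^i))))"
        by (rule sum.cong) (simp_all add: X_def algebra_simps)
      also have "\<dots> = 1/Gamma(1-\<alpha>) * (\<Sum>i\<le>d. c i * I i) - 1/(G2 * h powr \<alpha>) * (\<Sum>i\<le>d. c i * h^i * (Tsum \<alpha> n i - z * (0^i - 2 + 2^i)))"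
        by (simp add: sum_subtractf sum_distrib_left)
      finally show ?thesis unfolding cap app G2_def by simp
    qed
    have Xe: "X i = - (h powr (real i - \<alpha>) / G2) * Q \<alpha> n i" for i
    proof -
      have hpi: "h^i = h powr real i" using powr_realpow[OF hp, of i] by simp
      have hi: "h^i / h powr \<alpha> = h powr (real i - \<alpha>)" unfolding hpi by (simp only: powr_diff)
      have xi: "x powr (real i - \<alpha>) = real n powr (real i - \<alpha>) * h powr (real i - \<alpha>)"
        unfolding xnh by (rule powr_mult)
      have "X i = (1-\<alpha>)/G2 * (-(real i/(real i-\<alpha>)) * (real n powr (real i - \<alpha>) * h powr (real i - \<alpha>)))
           - 1/G2 * (h^i / h powr \<alpha>) * (Tsum \<alpha> n i - z * (0^i - 2 + 2^i))"
        unfolding X_def I_def G12 xi by (rule alg2)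
      also have "\<dots> = - (h powr (real i - \<alpha>) / G2) * Q \<alpha> n i"
      proof -
        have "(1-\<alpha>)/G2 * (-(real i/(real i-\<alpha>)) * (real n powr (real i - \<alpha>) * h powr (real i - \<alpha>)))
           - 1/G2 * (h powr (real i - \<alpha>)) * (Tsum \<alpha> n i - z * (0^i - 2 + 2^i))
           = - (h powr (real i - \<alpha>) / G2) * ((1-\<alpha>) * (real i/(real i-\<alpha>)) * real n powr (real i - \<alpha>) + (Tsum \<alpha> n i - z * (0^i - 2 + 2^i)))"
          by (rule alg)
        also have "\<dots> = - (h powr (real i - \<alpha>) / G2) * Q \<alpha> n i" by (simp add: Q_def z_def)
        finally show ?thesis unfolding hi .
      qed
      finally show ?thesis .
    qed
    have Xb: "\<bar>X i\<bar> \<le> K i / G2 * x powr (real i - 2 - \<alpha>) * h^2" for i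
    proof -
      have "\<bar>X i\<bar> = h powr (real i - \<alpha>) / G2 * \<bar>Q \<alpha> n i\<bar>" unfolding Xe using G2p by (simp add: abs_mult)
      also have "\<dots> \<le> h powr (real i - \<alpha>) / G2 * (K i * real n powr (real i - 2 - \<alpha>))"
        using K[of n i] n G2p by (intro mult_left_mono) auto
      also have "\<dots> = K i / G2 * (h powr 2 * (h powr (real i - 2 - \<alpha>) * real n powr (real i - 2 - \<alpha>)))"
      proof -
        have hs: "h powr (real i - \<alpha>) = h powr 2 * h powr (real i - 2 - \<alpha>)"
          using powr_add[of h 2 "real i - 2 - \<alpha>"] by simp
        show ?thesis unfolding hs by (rule alg3)
      qed
      also have "h powr (real i - 2 - \<alpha>) * real n powr (real i - 2 - \<alpha>) = x powr (real i - 2 - \<alpha>)"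
        unfolding xnh powr_mult by (rule mult.commute)
      also have "h powr 2 = h^2" using powr_realpow[OF hp, of 2] by simp
      finally show ?thesis by (simp only: mult_ac)
    qed
    have "\<bar>\<Sum>i\<le>d. c i * X i\<bar> \<le> (\<Sum>i\<le>d. \<bar>c i\<bar> * (K i / G2 * x powr (real i - 2 - \<alpha>) * h^2))"
    proof (rule order_trans[OF sum_abs sum_mono])
      fix i assume "i \<in> {..d}"
      show "\<bar>c i * X i\<bar> \<le> \<bar>c i\<bar> * (K i / G2 * x powr (real i - 2 - \<alpha>) * h^2)"
        unfolding abs_mult by (rule mult_left_mono[OF Xb]) simp
    qed
    also have "\<dots> = (\<Sum>i\<le>d. \<bar>c i\<bar> * K i / G2 * x powr (real i - 2 - \<alpha>)) * h^2"
      unfolding sum_distrib_right by (rule sum.cong) (simp_all add: algebra_simps)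
    finally show "\<bar>caputo \<alpha> (poly p) x - (1 / (Gamma (2 - \<alpha>) * (x / real n) powr \<alpha>)) *
               (\<Sum>k=0..n. delta_coef \<alpha> n k * poly p (real (n - k) * (x / real n)))\<bar>
           \<le> (\<Sum>i\<le>d. \<bar>c i\<bar> * K i / G2 * x powr (real i - 2 - \<alpha>)) * (x / real n)^2"
      using diff unfolding h_def by simp
  qed
qed


end
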